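(* Let $\varphi$ be a $\mathcal{COD}[\sigma]$-formula, let $\mathbf d=\langle[{=}(X_1),k_1],\dots,[{=}(X_n),k_n]\rangle$ be a sequence of occurrences of constancy atoms in $\varphi$, and let $F$ be the set of all instantiating functions over $\mathbf d$. Then $\varphi\equiv\bigsqcup_{f\in F}\varphi_f$ (both over causal teams, $\equiv^c$, and over generalized causal teams, $\equiv^g$).
   Context: A signature $\sigma=(\mathrm{Dom},\mathrm{Ran})$: $\mathrm{Dom}$ nonempty finite set of variables, each with nonempty finite range $\mathrm{Ran}(X)$; $\mathbf X=\mathbf x$ abbreviates $X_1=x_1\wedge\dots\wedge X_n=x_n$ ($\mathbf x\in\prod\mathrm{Ran}(X_i)$), inconsistent if it contains $X=x,X=x'$ with $x\ne x'$. $\mathcal{CO}[\sigma]$: $\alpha::=X=x\mid\neg\alpha\mid\alpha\wedge\alpha\mid\alpha\vee\alpha\mid\mathbf X=\mathbf x\;\Box\!\!\rightarrow\alpha$. $\mathcal{COD}[\sigma]$: $\varphi::=X=x\mid{=}(\mathbf X;Y)\mid\neg\alpha\mid\varphi\wedge\varphi\mid\varphi\vee\varphi\mid\mathbf X=\mathbf x\;\Box\!\!\rightarrow\varphi$ ($\alpha\in\mathcal{CO}[\sigma]$); ${=}(Y)$ denotes ${=}(\mathbf X;Y)$ with empty $\mathbf X$ (constancy atom). $\sqcup$ is the global disjunction: $T\models\varphi\sqcup\psi$ iff $T\models\varphi$ or $T\models\psi$. Systems of functions $\mathcal F$: for each $V\in\mathrm{En}(\mathcal F)\subseteq\mathrm{Dom}$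 parents $PA^{\mathcal F}_V\subseteq\mathrm{Dom}\setminus\{V\}$ and $\mathcal F_V:\mathrm{Ran}(PA^{\mathcal F}_V)\to\mathrm{Ran}(V)$; $\mathrm{Ex}(\mathcal F)=\mathrm{Dom}\setminus\mathrm{En}(\mathcal F)$; only recursive (acyclic parent graph). An assignment $s$ is compatible with $\mathcal F$ if $s(V)=\mathcal F_V(s(PA^{\mathcal F}_V))$ for $V\in\mathrm{En}(\mathcal F)$. For consistent $\mathbf X=\mathbf x$: $\mathcal F_{\mathbf X=\mathbf x}$ restricts $\mathcal F$ to $\mathrm{En}(\mathcal F)\setminus\mathbf X$; $s^{\mathcal F}_{\mathbf X=\mathbf x}$: $X_i\mapsto x_i$, $V\mapsto s(V)$ on $\mathrm{Ex}(\mathcal F)\setminus\mathbf X$, $V\mapsto\mathcal F_V(s^{\mathcal F}_{\mathbf X=\mathbf x}(PA^{\mathcal F}_V))$ on $\mathrm{En}(\mathcal F)\setminus\mathbf X$. Causal team $T=(T^-,\mathcal F)$ ($T^-$ compatible assignments; empty team components identified as $\emptyset$); causal subteams $(S^-,\mathcal F)$, $S^-\subseteq T^-$; $T_{\mathbf X=\mathbf x}=(\{s^{\mathcal F}_{\mathbf X=\mathbf x}:s\in T^-\},\mathcal F_{\mathbf X=\mathbf x})$; $\models^c$: $T\models X=x$ iff $s(X)=x$ for all $s\in T^-$; $T\models{=}(\mathbf X;Y)$ iff for all $s,s'\in T^-$, $s(\mathbf X)=s'(\mathbf X)$ implies $s(Y)=s'(Y)$; $T\models\neg\alpha$ iff $(\{s\},\mathcal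 F)\not\models\alpha$ for all $s\in T^-$; $\wedge$ classical; $T\models\varphi\vee\psi$ iff causal subteams $T_1,T_2$ exist with $T_1^-\cup T_2^-=T^-$, $T_1\models\varphi$, $T_2\models\psi$; $T\models\mathbf X=\mathbf x\;\Box\!\!\rightarrow\varphi$ iff $\mathbf X=\mathbf x$ inconsistent or $T_{\mathbf X=\mathbf x}\models\varphi$. Generalized causal team: a set $T$ of compatible pairs $(s,\mathcal F)$; $T^-=\{s:(s,\mathcal F)\in T\}$; $T_{\mathbf X=\mathbf x}=\{(s^{\mathcal F}_{\mathbf X=\mathbf x},\mathcal F_{\mathbf X=\mathbf x}):(s,\mathcal F)\in T\}$; $\models^g$: same clauses except $T\models\neg\alpha$ iff $\{(s,\mathcal F)\}\not\models\alpha$ for all $(s,\mathcal F)\in T$, and $T\models\varphi\vee\psi$ iff $T=T_1\cup T_2$ with $T_1\models\varphi$, $T_2\models\psi$. $\equiv^c$ / $\equiv^g$: satisfied by the same causal / generalized causal teams. $[{=}(X_i),k_i]$ denotes the $k_i$-th occurrence of the subformula ${=}(X_i)$ in $\varphi$ (the listed occurrences are distinct). An instantiating function over $\mathbf d$ is a function $f:\{1,\dots,n\}\to\bigcup_i\mathrm{Ran}(X_i)$ with $f(i)\in\mathrm{Ran}(X_i)$ for each $i$; $\varphi_f$ is the formula obtained from $\varphi$ by replacing, for each $i$, the occurrence $[{=}(X_i),k_i]$ by $X_i=f(i)$. *)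

theory Defs
  imports "HOL-Library.FuncSet"
begin

text \<open>Variables have type 'v, values have type 'a. A signature is a pair (Dom, Ran).
  An antecedent X = x is a list of (variable, value) pairs.\<close>

datatype ('v, 'a) fml =
    Eq 'v 'a
  | Dep "'v list" 'v                 \<comment> \<open>=(X_1..X_m; Y); constancy atom =(Y) is Dep [] Y\<close>
  | Neg "('v, 'a) fml"
  | And "('v, 'a) fml" "('v, 'a) fml"
  | Or  "('v, 'a) fml" "('v, 'a) fml"
  | Cf  "('v \<times> 'a) list" "('v, 'a) fml"

definition signature :: "'v set \<Rightarrow> ('v \<Rightarrow> 'a set) \<Rightarrow> bool" where
  "signature Dom Ran \<longleftrightarrow> finite Dom \<and> Dom \<noteq> {} \<and>
     (\<forall>X\<in>Dom. finite (Ran X) \<and> Ran X \<noteq> {})"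

fun is_CO :: "('v, 'a) fml \<Rightarrow> bool" where
  "is_CO (Eq X x) = True"
| "is_CO (Dep Xs Y) = False"
| "is_CO (Neg a) = is_CO a"
| "is_CO (And a b) = (is_CO a \<and> is_CO b)"
| "is_CO (Or a b) = (is_CO a \<and> is_CO b)"
| "is_CO (Cf xs a) = is_CO a"

fun wf_COD :: "'v set \<Rightarrow> ('v \<Rightarrow> 'a set) \<Rightarrow> ('v, 'a) fml \<Rightarrow> bool" where
  "wf_COD Dom Ran (Eq X x) = (X \<in> Dom \<and> x \<in> Ran X)"
| "wf_COD Dom Ran (Dep Xs Y) = (set Xs \<subseteq> Dom \<and> Y \<in> Dom)"
| "wf_COD Dom Ran (Neg a) = (is_CO a \<and> wf_COD Dom Ran a)"
| "wf_COD Dom Ran (And a b) = (wf_COD Dom Ran a \<and> wf_COD Dom Ran b)"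
| "wf_COD Dom Ran (Or a b) = (wf_COD Dom Ran a \<and> wf_COD Dom Ran b)"
| "wf_COD Dom Ran (Cf xs a) = (xs \<noteq> [] \<and> (\<forall>(X, x)\<in>set xs. X \<in> Dom \<and> x \<in> Ran X) \<and>
                                 wf_COD Dom Ran a)"

definition consistent :: "('v \<times> 'a) list \<Rightarrow> bool" where
  "consistent xs \<longleftrightarrow> (\<forall>(X, x)\<in>set xs. \<forall>(Y, y)\<in>set xs. X = Y \<longrightarrow> x = y)"

record ('v, 'a) sysf =
  En :: "'v set"
  PA :: "'v \<Rightarrow> 'v set"
  Fn :: "'v \<Rightarrow> ('v \<Rightarrow> 'a) \<Rightarrow> 'a"

text \<open>Assignments over the signature: extensional functions in PiE Dom Ran.
  A function F_V : Ran(PA_V) -> Ran(V) is an extensional function on parent assignments.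
  Only recursive (acyclic) systems.\<close>
definition sysf_wf :: "'v set \<Rightarrow> ('v \<Rightarrow> 'a set) \<Rightarrow> ('v, 'a) sysf \<Rightarrow> bool" where
  "sysf_wf Dom Ran F \<longleftrightarrow>
     En F \<subseteq> Dom \<and>
     (\<forall>V\<in>En F. PA F V \<subseteq> Dom - {V} \<and>
                Fn F V \<in> PiE (PiE (PA F V) Ran) (\<lambda>_. Ran V)) \<and>
     (\<forall>V. V \<notin> En F \<longrightarrow> PA F V = {} \<and> Fn F V = undefined) \<and>
     acyclic {(P, V). V \<in> En F \<and> P \<in> PA F V}"

definition compatible :: "('v, 'a) sysf \<Rightarrow> ('v \<Rightarrow> 'a) \<Rightarrow> bool" where
  "compatible F s \<longleftrightarrow> (\<forall>V\<in>En F. s V = Fn F V (restrict s (PA F V)))"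

definition ivars :: "('v \<times> 'a) list \<Rightarrow> 'v set" where
  "ivars xs = fst ` set xs"

definition ival :: "('v \<times> 'a) list \<Rightarrow> 'v \<Rightarrow> 'a" where
  "ival xs V = the (map_of xs V)"

definition intervene :: "('v, 'a) sysf \<Rightarrow> ('v \<times> 'a) list \<Rightarrow> ('v, 'a) sysf" where
  "intervene F xs =
     \<lparr> En = En F - ivars xs,
       PA = (\<lambda>V. if V \<in> En F - ivars xs then PA F V else {}),
       Fn = (\<lambda>V. if V \<in> En F - ivars xs then Fn F V else undefined) \<rparr>"

text \<open>s^F_{X=x}: the (unique, by recursiveness) assignment satisfying the recursive
  clauses of the definition.\<close>
definition do_assign :: "('v, 'a) sysf \<Rightarrow> ('v \<times> 'a) list \<Rightarrow> ('v \<Rightarrow> 'a) \<Rightarrow> ('v \<Rightarrow> 'a)" where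
  "do_assign F xs s = (THE t. \<forall>V. t V =
      (if V \<in> ivars xs then ival xs V
       else if V \<in> En F then Fn F V (restrict t (PA F V))
       else s V))"

definition causal_team :: "'v set \<Rightarrow> ('v \<Rightarrow> 'a set) \<Rightarrow> ('v \<Rightarrow> 'a) set \<Rightarrow> ('v, 'a) sysf \<Rightarrow> bool" where
  "causal_team Dom Ran T F \<longleftrightarrow> sysf_wf Dom Ran F \<and>
     (\<forall>s\<in>T. s \<in> PiE Dom Ran \<and> compatible F s)"

definition gen_causal_team :: "'v set \<Rightarrow> ('v \<Rightarrow> 'a set) \<Rightarrow> (('v \<Rightarrow> 'a) \<times> ('v, 'a) sysf) set \<Rightarrow> bool" where
  "gen_causal_team Dom Ran T \<longleftrightarrow>
     (\<forall>(s, F)\<in>T. sysf_wf Dom Ran F \<and> s \<in> PiE Dom Ran \<and> compatible F s)"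

fun sat_c :: "('v \<Rightarrow> 'a) set \<Rightarrow> ('v, 'a) sysf \<Rightarrow> ('v, 'a) fml \<Rightarrow> bool" where
  "sat_c T F (Eq X x) = (\<forall>s\<in>T. s X = x)"
| "sat_c T F (Dep Xs Y) = (\<forall>s\<in>T. \<forall>s'\<in>T. (\<forall>X\<in>set Xs. s X = s' X) \<longrightarrow> s Y = s' Y)"
| "sat_c T F (Neg a) = (\<forall>s\<in>T. \<not> sat_c {s} F a)"
| "sat_c T F (And a b) = (sat_c T F a \<and> sat_c T F b)"
| "sat_c T F (Or a b) = (\<exists>T1 T2. T1 \<subseteq> T \<and> T2 \<subseteq> T \<and> T1 \<union> T2 = T \<and> sat_c T1 F a \<and> sat_c T2 F b)"
| "sat_c T F (Cf xs a) = (\<not> consistent xs \<or> sat_c (do_assign F xs ` T) (intervene F xs) a)"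

fun sat_g :: "(('v \<Rightarrow> 'a) \<times> ('v, 'a) sysf) set \<Rightarrow> ('v, 'a) fml \<Rightarrow> bool" where
  "sat_g T (Eq X x) = (\<forall>(s, F)\<in>T. s X = x)"
| "sat_g T (Dep Xs Y) = (\<forall>(s, F)\<in>T. \<forall>(s', F')\<in>T. (\<forall>X\<in>set Xs. s X = s' X) \<longrightarrow> s Y = s' Y)"
| "sat_g T (Neg a) = (\<forall>p\<in>T. \<not> sat_g {p} a)"
| "sat_g T (And a b) = (sat_g T a \<and> sat_g T b)"
| "sat_g T (Or a b) = (\<exists>T1 T2. T = T1 \<union> T2 \<and> sat_g T1 a \<and> sat_g T2 b)"
| "sat_g T (Cf xs a) = (\<not> consistent xs \<or>
      sat_g ((\<lambda>(s, F). (do_assign F xs s, intervene F xs)) ` T) a)"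

text \<open>Positions (paths) of constancy atoms =(Y) in left-to-right (preorder) order.\<close>
fun cpos :: "('v, 'a) fml \<Rightarrow> ('v \<times> nat list) list" where
  "cpos (Eq X x) = []"
| "cpos (Dep Xs Y) = (if Xs = [] then [(Y, [])] else [])"
| "cpos (Neg a) = map (\<lambda>(Y, p). (Y, 0 # p)) (cpos a)"
| "cpos (And a b) = map (\<lambda>(Y, p). (Y, 0 # p)) (cpos a) @ map (\<lambda>(Y, p). (Y, 1 # p)) (cpos b)"
| "cpos (Or a b) = map (\<lambda>(Y, p). (Y, 0 # p)) (cpos a) @ map (\<lambda>(Y, p). (Y, 1 # p)) (cpos b)"
| "cpos (Cf xs a) = map (\<lambda>(Y, p). (Y, 0 # p)) (cpos a)"

definition occs :: "('v, 'a) fml \<Rightarrow> 'v \<Rightarrow> nat list list" where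
  "occs \<phi> X = map snd (filter (\<lambda>(Y, p). Y = X) (cpos \<phi>))"

text \<open>[=(X), k]: the k-th (1-based) occurrence of =(X) in phi.\<close>
definition occ :: "('v, 'a) fml \<Rightarrow> 'v \<Rightarrow> nat \<Rightarrow> nat list" where
  "occ \<phi> X k = occs \<phi> X ! (k - 1)"

definition valid_occ_seq :: "('v, 'a) fml \<Rightarrow> ('v \<times> nat) list \<Rightarrow> bool" where
  "valid_occ_seq \<phi> d \<longleftrightarrow> distinct d \<and>
     (\<forall>(X, k)\<in>set d. 1 \<le> k \<and> k \<le> length (occs \<phi> X))"

fun repl :: "('v, 'a) fml \<Rightarrow> (nat list \<Rightarrow> 'a option) \<Rightarrow> ('v, 'a) fml" where
  "repl (Eq X x) g = Eq X x"
| "repl (Dep Xs Y) g = (case g [] of Some x \<Rightarrow> (if Xs = [] then Eq Y x else Dep Xs Y)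
                                   | None \<Rightarrow> Dep Xs Y)"
| "repl (Neg a) g = Neg (repl a (\<lambda>p. g (0 # p)))"
| "repl (And a b) g = And (repl a (\<lambda>p. g (0 # p))) (repl b (\<lambda>p. g (1 # p)))"
| "repl (Or a b) g = Or (repl a (\<lambda>p. g (0 # p))) (repl b (\<lambda>p. g (1 # p)))"
| "repl (Cf xs a) g = Cf xs (repl a (\<lambda>p. g (0 # p)))"

text \<open>d = <[=(X_1),k_1], ..., [=(X_n),k_n]> is a list of pairs (X_i, k_i); d_i = d ! (i - 1).
  Instantiating functions over d: f : {1..n} -> Union Ran(X_i), f(i) in Ran(X_i).\<close>
definition inst_funs :: "('v \<Rightarrow> 'a set) \<Rightarrow> ('v \<times> nat) list \<Rightarrow> (nat \<Rightarrow> 'a) set" where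
  "inst_funs Ran d = PiE {1..length d} (\<lambda>i. Ran (fst (d ! (i - 1))))"

definition instantiate :: "('v, 'a) fml \<Rightarrow> ('v \<times> nat) list \<Rightarrow> (nat \<Rightarrow> 'a) \<Rightarrow> ('v, 'a) fml" where
  "instantiate \<phi> d f = repl \<phi> (\<lambda>p.
     if \<exists>i\<in>{1..length d}. occ \<phi> (fst (d ! (i - 1))) (snd (d ! (i - 1))) = p
     then Some (f (THE i. i \<in> {1..length d} \<and> occ \<phi> (fst (d ! (i - 1))) (snd (d ! (i - 1))) = p))
     else None)"

end

theory Submission
  imports Defs
begin


definition goodv :: "'v set \<Rightarrow> ('v \<Rightarrow> 'a set) \<Rightarrow> ('v \<Rightarrow> 'a) \<Rightarrow> bool" where
  "goodv Dom Ran s \<longleftrightarrow> (\<forall>Y\<in>Dom. s Y \<in> Ran Y)"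

lemma do_assign_good:
  assumes sg: "signature Dom Ran" and F: "sysf_wf Dom Ran F"
    and xs: "\<forall>(X, x)\<in>set xs. X \<in> Dom \<and> x \<in> Ran X"
    and s: "goodv Dom Ran s"
  shows "goodv Dom Ran (do_assign F xs s)"
proof -
  define R where "R = {(P, V). V \<in> En F \<and> P \<in> PA F V}"
  define G where "G = (\<lambda>t V. if V \<in> ivars xs then ival xs V
       else if V \<in> En F then Fn F V (restrict t (PA F V)) else s V)"
  have fin: "finite R"
  proof (rule finite_subset)
    show "R \<subseteq> Dom \<times> Dom" using F unfolding R_def sysf_wf_def by auto
    show "finite (Dom \<times> Dom)" using sg unfolding signature_def by auto
  qed
  have wf: "wf R" using fin F by (intro finite_acyclic_wf) (auto simp: sysf_wf_def R_def)
  have adm: "adm_wf R G"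
    unfolding adm_wf_def G_def R_def
    by (auto intro!: arg_cong[where f="Fn F _"] simp: restrict_def)
  define t0 where "t0 = wfrec R G"
  have fx: "t0 = G t0" unfolding t0_def using wfrec_fixpoint[OF wf adm] .
  have uniq: "t = t0" if "\<forall>V. t V = G t V" for t
  proof
    fix V show "t V = t0 V"
    proof (induction V rule: wf_induct[OF wf])
      case (1 x)
      have "t x = G t x" using that by blast
      also have "\<dots> = G t0 x" using adm 1 unfolding adm_wf_def by blast
      also have "\<dots> = t0 x" using fx by simp
      finally show ?case .
    qed
  qed
  have "do_assign F xs s = t0"
    unfolding do_assign_def
  proof (rule the_equality)
    show "\<forall>V. t0 V = (if V \<in> ivars xs then ival xs V
       else if V \<in> En F then Fn F V (restrict t0 (PA F V)) else s V)"
      using fx unfolding G_def by metis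
  next
    fix t assume "\<forall>V. t V = (if V \<in> ivars xs then ival xs V
       else if V \<in> En F then Fn F V (restrict t (PA F V)) else s V)"
    then show "t = t0" using uniq unfolding G_def by blast
  qed
  moreover have "V \<in> Dom \<longrightarrow> t0 V \<in> Ran V" for V
  proof (induction V rule: wf_induct[OF wf])
    case (1 V)
    show ?case
    proof
      assume V: "V \<in> Dom"
      show "t0 V \<in> Ran V"
      proof (cases "V \<in> ivars xs")
        case True
        then obtain v where "map_of xs V = Some v"
          unfolding ivars_def by (metis map_of_eq_None_iff not_Some_eq)
        then have "(V, v) \<in> set xs" by (rule map_of_SomeD)
        then have "v \<in> Ran V" using xs by auto
        then show ?thesis using True fx \<open>map_of xs V = Some v\<close>
          by (metis G_def ival_def option.sel)
      next
        case False
        show ?thesis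
        proof (cases "V \<in> En F")
          case True
          have pa: "PA F V \<subseteq> Dom" and fn: "Fn F V \<in> PiE (PiE (PA F V) Ran) (\<lambda>_. Ran V)"
            using F True unfolding sysf_wf_def by auto
          have r: "restrict t0 (PA F V) \<in> PiE (PA F V) Ran"
            using 1 pa True by (auto simp: R_def)
          have "Fn F V (restrict t0 (PA F V)) \<in> Ran V" using PiE_mem[OF fn r] by simp
          then show ?thesis using fx False True by (metis G_def)
        next
          case False2: False
          then show ?thesis using fx False s V unfolding goodv_def by (metis G_def)
        qed
      qed
    qed
  qed
  ultimately show ?thesis unfolding goodv_def by auto
qed

lemma intervene_wf:
  assumes "sysf_wf Dom Ran F" shows "sysf_wf Dom Ran (intervene F xs)"
proof -
  have "{(P, V). V \<in> En (intervene F xs) \<and> P \<in> PA (intervene F xs) V}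
        \<subseteq> {(P, V). V \<in> En F \<and> P \<in> PA F V}" by (auto simp: intervene_def)
  then show ?thesis using assms unfolding sysf_wf_def
    by (auto simp: intervene_def intro: acyclic_subset)
qed



lemma CO_repl: "is_CO a \<Longrightarrow> repl a g = a"
  by (induction a arbitrary: g) auto

lemma CO_cpos: "is_CO a \<Longrightarrow> cpos a = []"
  by (induction a) auto

lemma empty_c: "sat_c {} F a"
  by (induction a arbitrary: F) auto

lemma empty_g: "sat_g {} a"
  by (induction a) auto

lemma const_dep_c: assumes "\<forall>s\<in>T. s Y = x" shows "sat_c T F (Dep Xs Y)"
proof -
  { fix s s' assume "s \<in> T" "s' \<in> T" then have "s Y = s' Y" using assms by metis }
  then show ?thesis by simp
qed

lemma const_dep_g: assumes "\<forall>(s, F)\<in>T. s Y = x" shows "sat_g T (Dep Xs Y)"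
proof -
  { fix s F s' F' assume "(s, F) \<in> T" "(s', F') \<in> T" then have "s Y = x" "s' Y = x" using assms by fastforce+
    then have "s Y = s' Y" by simp }
  then show ?thesis by fastforce
qed

lemma mono_c: "wf_COD Dom Ran \<phi> \<Longrightarrow> sat_c T F (repl \<phi> g) \<Longrightarrow> sat_c T F \<phi>"
proof (induction \<phi> arbitrary: T F g)
  case (Dep Xs Y)
  show ?case
  proof (cases "g [] \<noteq> None \<and> Xs = []")
    case True
    then obtain x where "g [] = Some x" by auto
    then show ?thesis using Dep True by (intro const_dep_c[of _ _ x]) simp
  next
    case False
    then show ?thesis using Dep by (auto split: option.splits)
  qed
next
  case (Neg a)
  then show ?case by (simp add: CO_repl)
next
  case (Or a b)
  then obtain T1 T2 where "T1 \<subseteq> T" "T2 \<subseteq> T" "T1 \<union> T2 = T"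
    "sat_c T1 F (repl a (\<lambda>p. g (0 # p)))" "sat_c T2 F (repl b (\<lambda>p. g (1 # p)))" by auto
  moreover have "sat_c T1 F a" using Or.IH(1) Or.prems calculation by auto
  moreover have "sat_c T2 F b" using Or.IH(2) Or.prems calculation by auto
  ultimately show ?case by auto
next
  case (Cf xs a)
  show ?case
  proof (cases "consistent xs")
    case True
    then have "sat_c (do_assign F xs ` T) (intervene F xs) (repl a (\<lambda>p. g (0 # p)))"
      using Cf.prems by simp
    then have "sat_c (do_assign F xs ` T) (intervene F xs) a" using Cf.IH Cf.prems by auto
    then show ?thesis by simp
  qed simp
qed auto

lemma mono_g: "wf_COD Dom Ran \<phi> \<Longrightarrow> sat_g T (repl \<phi> g) \<Longrightarrow> sat_g T \<phi>"
proof (induction \<phi> arbitrary: T g)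
  case (Dep Xs Y)
  show ?case
  proof (cases "g [] \<noteq> None \<and> Xs = []")
    case True
    then obtain x where "g [] = Some x" by auto
    then show ?thesis using Dep True by (intro const_dep_g[of _ _ x]) simp
  next
    case False
    then show ?thesis using Dep by (auto split: option.splits)
  qed
next
  case (Neg a)
  then show ?case by (simp add: CO_repl)
next
  case (Or a b)
  then obtain T1 T2 where "T = T1 \<union> T2"
    "sat_g T1 (repl a (\<lambda>p. g (0 # p)))" "sat_g T2 (repl b (\<lambda>p. g (1 # p)))" by auto
  moreover have "sat_g T1 a" using Or.IH(1) Or.prems calculation by auto
  moreover have "sat_g T2 b" using Or.IH(2) Or.prems calculation by auto
  ultimately show ?case by auto
next
  case (Cf xs a)
  let ?T = "(\<lambda>(s, F). (do_assign F xs s, intervene F xs)) ` T"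
  show ?case
  proof (cases "consistent xs")
    case True
    then have "sat_g ?T (repl a (\<lambda>p. g (0 # p)))"
      using Cf.prems by simp
    then have "sat_g ?T a" using Cf.IH Cf.prems by auto
    then show ?thesis by simp
  qed simp
qed auto

definition comb :: "(nat list \<Rightarrow> 'a) \<Rightarrow> (nat list \<Rightarrow> 'a) \<Rightarrow> nat list \<Rightarrow> 'a" where
  "comb ha hb p = (if hd p = 0 then ha (tl p) else hb (tl p))"

lemma comb0[simp]: "comb ha hb (0 # p) = ha p" by (simp add: comb_def)
lemma comb1[simp]: "comb ha hb (1 # p) = hb p" by (simp add: comb_def)
lemma comb1'[simp]: "comb ha hb (Suc 0 # p) = hb p" by (simp add: comb_def)

lemma shift0: "(\<lambda>p. if 0 # p \<in> P then Some (h (0 # p)) else None)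
   = (\<lambda>p. if p \<in> {p. 0 # p \<in> P} then Some ((\<lambda>q. h (0 # q)) p) else None)"
  by auto

lemma key_c:
  assumes "wf_COD Dom Ran \<phi>" "signature Dom Ran" "sysf_wf Dom Ran F"
    "\<forall>s\<in>T. goodv Dom Ran s" "sat_c T F \<phi>"
  shows "\<exists>h. (\<forall>(Y, p)\<in>set (cpos \<phi>). h p \<in> Ran Y) \<and>
     sat_c T F (repl \<phi> (\<lambda>p. if p \<in> P then Some (h p) else None))"
  using assms
proof (induction \<phi> arbitrary: T F P)
  case (Eq X x)
  then show ?case by auto
next
  case (Dep Xs Y)
  show ?case
  proof (cases "Xs = []")
    case False
    then show ?thesis using Dep by (auto split: option.splits)
  next
    case True
    have Y: "Y \<in> Dom" using Dep by simp
    then have ne: "Ran Y \<noteq> {}" using Dep(2) unfolding signature_def by auto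
    define x where "x = (if T = {} then (SOME x. x \<in> Ran Y) else (SOME s. s \<in> T) Y)"
    have xr: "x \<in> Ran Y"
    proof (cases "T = {}")
      case True then show ?thesis using ne x_def by (simp add: some_in_eq)
    next
      case False
      then have "(SOME s. s \<in> T) \<in> T" by (simp add: some_in_eq)
      then show ?thesis using Dep(4) Y False unfolding x_def goodv_def by auto
    qed
    have all: "\<forall>s\<in>T. s Y = x"
    proof
      fix s assume "s \<in> T"
      then have "(SOME s. s \<in> T) \<in> T" using someI[of "\<lambda>s. s \<in> T"] by blast
      then show "s Y = x" using Dep(5) True \<open>s \<in> T\<close> unfolding x_def by auto
    qed
    have "sat_c T F (Dep [] Y)" using const_dep_c[OF all] .
    then show ?thesis
      by (intro exI[where x="\<lambda>_. x"]) (use True xr all in \<open>auto simp del: sat_c.simps(2)\<close>)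
  qed
next
  case (Neg a)
  then show ?case by (simp add: CO_repl CO_cpos)
next
  case (And a b)
  obtain ha where ha: "\<forall>(Y, p)\<in>set (cpos a). ha p \<in> Ran Y"
    "sat_c T F (repl a (\<lambda>p. if p \<in> {p. 0 # p \<in> P} then Some (ha p) else None))"
    using And.IH(1)[where T=T and F=F and P="{p. 0 # p \<in> P}"] And.prems by auto
  obtain hb where hb: "\<forall>(Y, p)\<in>set (cpos b). hb p \<in> Ran Y"
    "sat_c T F (repl b (\<lambda>p. if p \<in> {p. 1 # p \<in> P} then Some (hb p) else None))"
    using And.IH(2)[where T=T and F=F and P="{p. 1 # p \<in> P}"] And.prems by auto
  have e0: "(\<lambda>p. if 0 # p \<in> P then Some (comb ha hb (0 # p)) else None)
      = (\<lambda>p. if p \<in> {p. 0 # p \<in> P} then Some (ha p) else None)"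
    by (rule ext) (simp add: comb_def)
  have e1: "(\<lambda>p. if 1 # p \<in> P then Some (comb ha hb (1 # p)) else None)
      = (\<lambda>p. if p \<in> {p. 1 # p \<in> P} then Some (hb p) else None)"
    by (rule ext) (simp add: comb_def)
  have c: "\<forall>(Y, p)\<in>set (cpos (And a b)). comb ha hb p \<in> Ran Y"
    using ha(1) hb(1) by (auto simp: comb_def)
  have "sat_c T F (repl (And a b) (\<lambda>p. if p \<in> P then Some (comb ha hb p) else None))"
    unfolding repl.simps sat_c.simps e0 e1 using ha(2) hb(2) by blast
  with c show ?case by blast
next
  case (Or a b)
  obtain T1 T2 where T: "T1 \<subseteq> T" "T2 \<subseteq> T" "T1 \<union> T2 = T" "sat_c T1 F a" "sat_c T2 F b"
    using Or.prems by auto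
  obtain ha where ha: "\<forall>(Y, p)\<in>set (cpos a). ha p \<in> Ran Y"
    "sat_c T1 F (repl a (\<lambda>p. if p \<in> {p. 0 # p \<in> P} then Some (ha p) else None))"
    using Or.IH(1)[where T=T1 and F=F and P="{p. 0 # p \<in> P}"] Or.prems T by auto
  obtain hb where hb: "\<forall>(Y, p)\<in>set (cpos b). hb p \<in> Ran Y"
    "sat_c T2 F (repl b (\<lambda>p. if p \<in> {p. 1 # p \<in> P} then Some (hb p) else None))"
    using Or.IH(2)[where T=T2 and F=F and P="{p. 1 # p \<in> P}"] Or.prems T by auto
  have e0: "(\<lambda>p. if 0 # p \<in> P then Some (comb ha hb (0 # p)) else None)
      = (\<lambda>p. if p \<in> {p. 0 # p \<in> P} then Some (ha p) else None)"
    by (rule ext) (simp add: comb_def)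
  have e1: "(\<lambda>p. if 1 # p \<in> P then Some (comb ha hb (1 # p)) else None)
      = (\<lambda>p. if p \<in> {p. 1 # p \<in> P} then Some (hb p) else None)"
    by (rule ext) (simp add: comb_def)
  have c: "\<forall>(Y, p)\<in>set (cpos (Or a b)). comb ha hb p \<in> Ran Y"
    using ha(1) hb(1) by (auto simp: comb_def)
  have "sat_c T F (repl (Or a b) (\<lambda>p. if p \<in> P then Some (comb ha hb p) else None))"
    unfolding repl.simps sat_c.simps e0 e1 using ha(2) hb(2) T by blast
  with c show ?case by blast
next
  case (Cf xs a)
  show ?case
  proof (cases "consistent xs")
    case False
    obtain ha where ha: "\<forall>(Y, p)\<in>set (cpos a). ha p \<in> Ran Y"
      using Cf.IH[where T="{}" and F=F and P="{}"] Cf.prems empty_c by auto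
    show ?thesis
      by (rule exI[where x="\<lambda>p. ha (tl p)"]) (use ha False in \<open>auto cong: if_cong\<close>)
  next
    case True
    have F': "sysf_wf Dom Ran (intervene F xs)" using Cf.prems intervene_wf by blast
    have T': "\<forall>s\<in>do_assign F xs ` T. goodv Dom Ran s"
      using Cf.prems do_assign_good by fastforce
    obtain ha where ha: "\<forall>(Y, p)\<in>set (cpos a). ha p \<in> Ran Y"
      "sat_c (do_assign F xs ` T) (intervene F xs)
         (repl a (\<lambda>p. if p \<in> {p. 0 # p \<in> P} then Some (ha p) else None))"
      using Cf.IH[where T="do_assign F xs ` T" and F="intervene F xs" and P="{p. 0 # p \<in> P}"] Cf.prems F' T' True
      by auto
    show ?thesis
      by (rule exI[where x="\<lambda>p. ha (tl p)"]) (use ha True in \<open>auto cong: if_cong\<close>)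
  qed
qed

lemma key_g:
  assumes "wf_COD Dom Ran \<phi>" "signature Dom Ran" "\<forall>(s, F)\<in>T. sysf_wf Dom Ran F \<and> goodv Dom Ran s" "sat_g T \<phi>"
  shows "\<exists>h. (\<forall>(Y, p)\<in>set (cpos \<phi>). h p \<in> Ran Y) \<and>
     sat_g T (repl \<phi> (\<lambda>p. if p \<in> P then Some (h p) else None))"
  using assms
proof (induction \<phi> arbitrary: T P)
  case (Eq X x)
  then show ?case by auto
next
  case (Dep Xs Y)
  show ?case
  proof (cases "Xs = []")
    case False
    then show ?thesis using Dep by (auto split: option.splits)
  next
    case True
    have Y: "Y \<in> Dom" using Dep by simp
    then have ne: "Ran Y \<noteq> {}" using Dep(2) unfolding signature_def by auto
    define x where "x = (if T = {} then (SOME x. x \<in> Ran Y) else fst (SOME s. s \<in> T) Y)"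
    have xr: "x \<in> Ran Y"
    proof (cases "T = {}")
      case True then show ?thesis using ne x_def by (simp add: some_in_eq)
    next
      case False
      then have i: "(SOME s. s \<in> T) \<in> T" by (simp add: some_in_eq)
      obtain s0 F0 where e: "(SOME s. s \<in> T) = (s0, F0)" by (cases "SOME s. s \<in> T")
      have "(s0, F0) \<in> T" using i e by simp
      then show ?thesis using Dep(3) Y False e unfolding x_def goodv_def by auto
    qed
    have all: "\<forall>(s, F)\<in>T. s Y = x"
    proof (intro ballI, clarify)
      fix s F assume sT: "(s, F) \<in> T"
      then have i: "(SOME s. s \<in> T) \<in> T" using someI[of "\<lambda>s. s \<in> T"] by blast
      obtain s0 F0 where e: "(SOME s. s \<in> T) = (s0, F0)" by (cases "SOME s. s \<in> T")
      have s0: "(s0, F0) \<in> T" using i e by simp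
      have "\<forall>(s, F)\<in>T. \<forall>(s', F')\<in>T. s Y = s' Y" using Dep(4) True by simp
      then have "case (s, F) of (s, F) \<Rightarrow> \<forall>(s', F')\<in>T. s Y = s' Y" using sT by (rule bspec)
      then have "\<forall>(s', F')\<in>T. s Y = s' Y" by simp
      then have "case (s0, F0) of (s', F') \<Rightarrow> s Y = s' Y" using s0 by (rule bspec)
      then have "s Y = s0 Y" by simp
      then show "s Y = x" using sT e unfolding x_def by auto
    qed
    have "sat_g T (Dep [] Y)" using const_dep_g[OF all] .
    then show ?thesis
      by (intro exI[where x="\<lambda>_. x"]) (use True xr all in \<open>auto simp del: sat_g.simps(2)\<close>)
  qed
next
  case (Neg a)
  then show ?case by (simp add: CO_repl CO_cpos)
next
  case (And a b)
  obtain ha where ha: "\<forall>(Y, p)\<in>set (cpos a). ha p \<in> Ran Y"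
    "sat_g T (repl a (\<lambda>p. if p \<in> {p. 0 # p \<in> P} then Some (ha p) else None))"
    using And.IH(1)[where T=T and P="{p. 0 # p \<in> P}"] And.prems by auto
  obtain hb where hb: "\<forall>(Y, p)\<in>set (cpos b). hb p \<in> Ran Y"
    "sat_g T (repl b (\<lambda>p. if p \<in> {p. 1 # p \<in> P} then Some (hb p) else None))"
    using And.IH(2)[where T=T and P="{p. 1 # p \<in> P}"] And.prems by auto
  have e0: "(\<lambda>p. if 0 # p \<in> P then Some (comb ha hb (0 # p)) else None)
      = (\<lambda>p. if p \<in> {p. 0 # p \<in> P} then Some (ha p) else None)"
    by (rule ext) (simp add: comb_def)
  have e1: "(\<lambda>p. if 1 # p \<in> P then Some (comb ha hb (1 # p)) else None)
      = (\<lambda>p. if p \<in> {p. 1 # p \<in> P} then Some (hb p) else None)"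
    by (rule ext) (simp add: comb_def)
  have c: "\<forall>(Y, p)\<in>set (cpos (And a b)). comb ha hb p \<in> Ran Y"
    using ha(1) hb(1) by (auto simp: comb_def)
  have "sat_g T (repl (And a b) (\<lambda>p. if p \<in> P then Some (comb ha hb p) else None))"
    unfolding repl.simps sat_g.simps e0 e1 using ha(2) hb(2) by blast
  with c show ?case by blast
next
  case (Or a b)
  obtain T1 T2 where T: "T1 \<subseteq> T" "T2 \<subseteq> T" "T1 \<union> T2 = T" "sat_g T1 a" "sat_g T2 b"
    using Or.prems by auto
  obtain ha where ha: "\<forall>(Y, p)\<in>set (cpos a). ha p \<in> Ran Y"
    "sat_g T1 (repl a (\<lambda>p. if p \<in> {p. 0 # p \<in> P} then Some (ha p) else None))"
    using Or.IH(1)[where T=T1 and P="{p. 0 # p \<in> P}"] Or.prems T by auto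
  obtain hb where hb: "\<forall>(Y, p)\<in>set (cpos b). hb p \<in> Ran Y"
    "sat_g T2 (repl b (\<lambda>p. if p \<in> {p. 1 # p \<in> P} then Some (hb p) else None))"
    using Or.IH(2)[where T=T2 and P="{p. 1 # p \<in> P}"] Or.prems T by auto
  have e0: "(\<lambda>p. if 0 # p \<in> P then Some (comb ha hb (0 # p)) else None)
      = (\<lambda>p. if p \<in> {p. 0 # p \<in> P} then Some (ha p) else None)"
    by (rule ext) (simp add: comb_def)
  have e1: "(\<lambda>p. if 1 # p \<in> P then Some (comb ha hb (1 # p)) else None)
      = (\<lambda>p. if p \<in> {p. 1 # p \<in> P} then Some (hb p) else None)"
    by (rule ext) (simp add: comb_def)
  have c: "\<forall>(Y, p)\<in>set (cpos (Or a b)). comb ha hb p \<in> Ran Y"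
    using ha(1) hb(1) by (auto simp: comb_def)
  have "sat_g T (repl (Or a b) (\<lambda>p. if p \<in> P then Some (comb ha hb p) else None))"
    unfolding repl.simps sat_g.simps e0 e1 using ha(2) hb(2) T by blast
  with c show ?case by blast
next
  case (Cf xs a)
  show ?case
  proof (cases "consistent xs")
    case False
    obtain ha where ha: "\<forall>(Y, p)\<in>set (cpos a). ha p \<in> Ran Y"
      using Cf.IH[where T="{}" and P="{}"] Cf.prems empty_g by auto
    show ?thesis
      by (rule exI[where x="\<lambda>p. ha (tl p)"]) (use ha False in \<open>auto cong: if_cong\<close>)
  next
    case True
    let ?T = "(\<lambda>(s, F). (do_assign F xs s, intervene F xs)) ` T"
    have T': "\<forall>(s, F)\<in>?T. sysf_wf Dom Ran F \<and> goodv Dom Ran s"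
      using Cf.prems do_assign_good intervene_wf by fastforce
    obtain ha where ha: "\<forall>(Y, p)\<in>set (cpos a). ha p \<in> Ran Y"
      "sat_g ?T (repl a (\<lambda>p. if p \<in> {p. 0 # p \<in> P} then Some (ha p) else None))"
      using Cf.IH[where T="?T" and P="{p. 0 # p \<in> P}"] Cf.prems T' True
      by auto
    have e0: "(\<lambda>p. if 0 # p \<in> P then Some ((\<lambda>p. ha (tl p)) (0 # p)) else None)
      = (\<lambda>p. if p \<in> {p. 0 # p \<in> P} then Some (ha p) else None)"
      by (rule ext) simp
    have c: "\<forall>(Y, p)\<in>set (cpos (Cf xs a)). (\<lambda>p. ha (tl p)) p \<in> Ran Y"
      using ha(1) by auto
    have "sat_g T (repl (Cf xs a) (\<lambda>p. if p \<in> P then Some ((\<lambda>p. ha (tl p)) p) else None))"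
      unfolding repl.simps sat_g.simps e0 using ha(2) True by blast
    with c show ?thesis by (intro exI[where x="\<lambda>p. ha (tl p)"] conjI)
  qed
qed




lemma cpos_distinct: "distinct (map snd (cpos \<phi>))"
proof (induction \<phi>)
  case (And a b)
  then show ?case
    by (auto simp: distinct_map inj_on_def case_prod_beta)
next
  case (Or a b)
  then show ?case
    by (auto simp: distinct_map inj_on_def case_prod_beta)
next
  case (Neg a)
  then show ?case
    by (auto simp: distinct_map inj_on_def case_prod_beta)
next
  case (Cf xs a)
  then show ?case
    by (auto simp: distinct_map inj_on_def case_prod_beta)
qed auto

lemma occ_in:
  assumes "1 \<le> k" "k \<le> length (occs \<phi> X)"
  shows "(X, occ \<phi> X k) \<in> set (cpos \<phi>)"
proof -
  have "occ \<phi> X k \<in> set (occs \<phi> X)" using assms unfolding occ_def by auto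
  then show ?thesis unfolding occs_def by auto
qed

lemma d_mem: "i \<in> {1..length d} \<Longrightarrow> d ! (i - 1) \<in> set d"
  by (rule nth_mem) auto

lemma occ_inj:
  assumes v: "valid_occ_seq \<phi> d" and i: "i \<in> {1..length d}" and j: "j \<in> {1..length d}"
    and eq: "occ \<phi> (fst (d ! (i - 1))) (snd (d ! (i - 1))) = occ \<phi> (fst (d ! (j - 1))) (snd (d ! (j - 1)))"
  shows "i = j"
proof -
  obtain X k where di: "d ! (i - 1) = (X, k)" by (cases "d ! (i - 1)")
  obtain X' k' where dj: "d ! (j - 1) = (X', k')" by (cases "d ! (j - 1)")
  have "(X, k) \<in> set d" using di d_mem[OF i] by simp
  then have k: "1 \<le> k" "k \<le> length (occs \<phi> X)" using v unfolding valid_occ_seq_def by auto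
  have "(X', k') \<in> set d" using dj d_mem[OF j] by simp
  then have k': "1 \<le> k'" "k' \<le> length (occs \<phi> X')" using v unfolding valid_occ_seq_def by auto
  have eq': "occ \<phi> X k = occ \<phi> X' k'" using eq di dj by simp
  have m1: "(X, occ \<phi> X k) \<in> set (cpos \<phi>)" using occ_in[OF k] .
  have m2: "(X', occ \<phi> X k) \<in> set (cpos \<phi>)" using occ_in[OF k'] eq' by simp
  have inj: "inj_on snd (set (cpos \<phi>))" using cpos_distinct distinct_map by blast
  have "(X, occ \<phi> X k) = (X', occ \<phi> X k)" by (rule inj_onD[OF inj _ m1 m2]) simp
  then have XX: "X = X'" by simp
  have dist: "distinct (occs \<phi> X)" unfolding occs_def using cpos_distinct distinct_map_filter by blast
  have "occs \<phi> X ! (k - 1) = occs \<phi> X ! (k' - 1)" using eq' XX unfolding occ_def by simp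
  then have "k - 1 = k' - 1" using dist k k' XX nth_eq_iff_index_eq by fastforce
  then have "k = k'" using k k' by simp
  then have "d ! (i - 1) = d ! (j - 1)" using di dj XX by simp
  then have "i - 1 = j - 1" using nth_eq_iff_index_eq[of d "i - 1" "j - 1"] v i j
    unfolding valid_occ_seq_def by auto
  moreover have "1 \<le> i" "1 \<le> j" using i j by auto
  ultimately show ?thesis by arith
qed

lemma inst_eq:
  assumes v: "valid_occ_seq \<phi> d"
  defines "oc \<equiv> \<lambda>i. occ \<phi> (fst (d ! (i - 1))) (snd (d ! (i - 1)))"
  shows "instantiate \<phi> d (restrict (\<lambda>i. h (oc i)) {1..length d})
       = repl \<phi> (\<lambda>p. if p \<in> oc ` {1..length d} then Some (h p) else None)"
  unfolding instantiate_def
proof (rule arg_cong[where f="repl \<phi>"], rule ext)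
  fix p
  show "(if \<exists>i\<in>{1..length d}. occ \<phi> (fst (d ! (i - 1))) (snd (d ! (i - 1))) = p
        then Some (restrict (\<lambda>i. h (oc i)) {1..length d}
          (THE i. i \<in> {1..length d} \<and> occ \<phi> (fst (d ! (i - 1))) (snd (d ! (i - 1))) = p))
        else None) = (if p \<in> oc ` {1..length d} then Some (h p) else None)"
  proof (cases "\<exists>i\<in>{1..length d}. oc i = p")
    case True
    then obtain i where i: "i \<in> {1..length d}" "oc i = p" by blast
    have the: "(THE i. i \<in> {1..length d} \<and> oc i = p) = i"
      using i occ_inj[OF v] unfolding oc_def by (intro the_equality) auto
    show ?thesis using True i the unfolding oc_def by auto
  next
    case False
    then show ?thesis unfolding oc_def by auto
  qed
qed



theorem lemma5p15:
  fixes Dom :: "'v set" and Ran :: "'v \<Rightarrow> 'a set"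
    and \<phi> :: "('v, 'a) fml" and d :: "('v \<times> nat) list"
  assumes "signature Dom Ran"
    and "wf_COD Dom Ran \<phi>"
    and "valid_occ_seq \<phi> d"
  shows "(\<forall>T F. causal_team Dom Ran T F \<longrightarrow>
            (sat_c T F \<phi> \<longleftrightarrow> (\<exists>f\<in>inst_funs Ran d. sat_c T F (instantiate \<phi> d f))))
       \<and> (\<forall>T. gen_causal_team Dom Ran T \<longrightarrow>
            (sat_g T \<phi> \<longleftrightarrow> (\<exists>f\<in>inst_funs Ran d. sat_g T (instantiate \<phi> d f))))"
proof -
  let ?oc = "\<lambda>i. occ \<phi> (fst (d ! (i - 1))) (snd (d ! (i - 1)))"
  let ?P = "?oc ` {1..length d}"
  have inf: "restrict (\<lambda>i. h (?oc i)) {1..length d} \<in> inst_funs Ran d"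
    if h: "\<forall>(Y, p)\<in>set (cpos \<phi>). h p \<in> Ran Y" for h
    unfolding inst_funs_def restrict_PiE_iff
  proof
    fix i assume i: "i \<in> {1..length d}"
    obtain X k where dk: "d ! (i - 1) = (X, k)" by (cases "d ! (i - 1)")
    have "(X, k) \<in> set d" using d_mem[OF i] dk by simp
    then have k: "1 \<le> k" "k \<le> length (occs \<phi> X)" using assms(3) unfolding valid_occ_seq_def by auto
    have "(X, occ \<phi> X k) \<in> set (cpos \<phi>)" by (rule occ_in[OF k])
    then have "h (occ \<phi> X k) \<in> Ran X" using h by auto
    then show "h (?oc i) \<in> Ran (fst (d ! (i - 1)))" using dk by simp
  qed
  have ie: "instantiate \<phi> d (restrict (\<lambda>i. h (?oc i)) {1..length d})
       = repl \<phi> (\<lambda>p. if p \<in> ?P then Some (h p) else None)" for h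
    using inst_eq[OF assms(3)] by simp
  have part1: "\<forall>T F. causal_team Dom Ran T F \<longrightarrow>
            (sat_c T F \<phi> \<longleftrightarrow> (\<exists>f\<in>inst_funs Ran d. sat_c T F (instantiate \<phi> d f)))"
  proof (intro allI impI)
    fix T F assume ct: "causal_team Dom Ran T F"
    have Fw: "sysf_wf Dom Ran F" using ct unfolding causal_team_def by simp
    have good: "\<forall>s\<in>T. goodv Dom Ran s"
      using ct unfolding causal_team_def goodv_def by (meson PiE_mem)
    show "sat_c T F \<phi> \<longleftrightarrow> (\<exists>f\<in>inst_funs Ran d. sat_c T F (instantiate \<phi> d f))"
    proof
      assume "sat_c T F \<phi>"
      then obtain h where h: "\<forall>(Y, p)\<in>set (cpos \<phi>). h p \<in> Ran Y"
        "sat_c T F (repl \<phi> (\<lambda>p. if p \<in> ?P then Some (h p) else None))"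
        using key_c[OF assms(2,1) Fw good] by blast
      have "sat_c T F (instantiate \<phi> d (restrict (\<lambda>i. h (?oc i)) {1..length d}))"
        unfolding ie by (rule h(2))
      then show "\<exists>f\<in>inst_funs Ran d. sat_c T F (instantiate \<phi> d f)"
        using inf[OF h(1)] by blast
    next
      assume "\<exists>f\<in>inst_funs Ran d. sat_c T F (instantiate \<phi> d f)"
      then obtain f where "sat_c T F (instantiate \<phi> d f)" by blast
      then show "sat_c T F \<phi>" unfolding instantiate_def by (rule mono_c[OF assms(2)])
    qed
  qed
  have part2: "\<forall>T. gen_causal_team Dom Ran T \<longrightarrow>
            (sat_g T \<phi> \<longleftrightarrow> (\<exists>f\<in>inst_funs Ran d. sat_g T (instantiate \<phi> d f)))"
  proof (intro allI impI)
    fix T assume ct: "gen_causal_team Dom Ran T"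
    have good: "\<forall>(s, F)\<in>T. sysf_wf Dom Ran F \<and> goodv Dom Ran s"
      using ct unfolding gen_causal_team_def goodv_def by (fastforce dest: PiE_mem)
    show "sat_g T \<phi> \<longleftrightarrow> (\<exists>f\<in>inst_funs Ran d. sat_g T (instantiate \<phi> d f))"
    proof
      assume "sat_g T \<phi>"
      then obtain h where h: "\<forall>(Y, p)\<in>set (cpos \<phi>). h p \<in> Ran Y"
        "sat_g T (repl \<phi> (\<lambda>p. if p \<in> ?P then Some (h p) else None))"
        using key_g[OF assms(2,1) good] by blast
      have "sat_g T (instantiate \<phi> d (restrict (\<lambda>i. h (?oc i)) {1..length d}))"
        unfolding ie by (rule h(2))
      then show "\<exists>f\<in>inst_funs Ran d. sat_g T (instantiate \<phi> d f)"
        using inf[OF h(1)] by blast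
    next
      assume "\<exists>f\<in>inst_funs Ran d. sat_g T (instantiate \<phi> d f)"
      then obtain f where "sat_g T (instantiate \<phi> d f)" by blast
      then show "sat_g T \<phi>" unfolding instantiate_def by (rule mono_g[OF assms(2)])
    qed
  qed
  show ?thesis using part1 part2 by blast
qed

end
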